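(* For every zero-normalized $\Gamma_{m,n}$-semimodule $\Delta$ one has $G_n(\Delta)=\big(G_m(\widehat{\Delta})\big)^T$, where $T$ denotes transposition (conjugation) of Young diagrams.
   Context: Let $m,n$ be coprime positive integers and $\Gamma=\{am+bn:a,b\in\mathbb{Z}_{\ge0}\}$. A $\Gamma$-semimodule is $\Delta\subset\mathbb{Z}_{\ge0}$ with $\Delta+\Gamma\subset\Delta$; zero-normalized means $\min\Delta=0$. For $p\in\{m,n\}$, a $p$-generator of $\Delta$ is $a\in\Delta$ with $a-p\notin\Delta$; there are exactly $p$ of them. Let $a_1<\dots<a_m$ be the $m$-generators and $b_1<\dots<b_n$ the $n$-generators. Put $g_m(x)=\#(([x,x+n)\cap\mathbb{Z})\setminus\Delta)$ and $g_n(x)=\#(([x,x+m)\cap\mathbb{Z})\setminus\Delta)$. Then $g_m(a_1)\ge\dots\ge g_m(a_m)$ and $g_n(b_1)\ge\dots\ge g_n(b_n)$; $G_m(\Delta)$ is the Young diagram with column heights $g_m(a_1),\dots,g_m(a_m)$ and $G_n(\Delta)$ the Young diagram with column heights $g_n(b_1),\dots,g_n(b_n)$. The dual semimodule is $\Delta^*=\{\varphi\in\mathbb{Z}:\varphi+\Delta\subset\Gamma\}$ and $\widehat{\Delta}=\Delta^*-\min\Delta^*$ is its zero-normalization; equivalently $\widehat\Delta=\max(\mathbb{Z}\setminus\Delta)-(\mathbb{Z}\setminus\Delta)$. *)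

theory Defs
  imports Main
begin

definition Gamma :: "nat \<Rightarrow> nat \<Rightarrow> int set" where
  "Gamma m n = {int a * int m + int b * int n | a b :: nat. True}"

definition semimodule :: "nat \<Rightarrow> nat \<Rightarrow> int set \<Rightarrow> bool" where
  "semimodule m n D \<longleftrightarrow> D \<subseteq> {0..} \<and> (\<forall>x\<in>D. \<forall>g\<in>Gamma m n. x + g \<in> D)"

definition zero_normalized :: "int set \<Rightarrow> bool" where
  "zero_normalized D \<longleftrightarrow> 0 \<in> D \<and> (\<forall>x\<in>D. 0 \<le> x)"

definition generators :: "nat \<Rightarrow> int set \<Rightarrow> int set" where
  "generators p D = {a \<in> D. a - int p \<notin> D}"

definition gapcount :: "nat \<Rightarrow> int set \<Rightarrow> int \<Rightarrow> nat" where
  "gapcount q D x = card ({x..<x + int q} - D)"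

text \<open>Young diagram (as a set of cells (column, row)) whose i-th column (0-indexed)
  has height g(a_(i+1)), where a_1 < ... < a_p are the p-generators and the window
  length is q.\<close>
definition young_diag :: "nat \<Rightarrow> nat \<Rightarrow> int set \<Rightarrow> (nat \<times> nat) set" where
  "young_diag p q D =
     (let s = sorted_list_of_set (generators p D)
      in {(i, j). i < length s \<and> j < gapcount q D (s ! i)})"

definition G_m :: "nat \<Rightarrow> nat \<Rightarrow> int set \<Rightarrow> (nat \<times> nat) set" where
  "G_m m n D = young_diag m n D"

definition G_n :: "nat \<Rightarrow> nat \<Rightarrow> int set \<Rightarrow> (nat \<times> nat) set" where
  "G_n m n D = young_diag n m D"

definition transpose_diag :: "(nat \<times> nat) set \<Rightarrow> (nat \<times> nat) set" where
  "transpose_diag Y = {(j, i) | i j. (i, j) \<in> Y}"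

definition dual :: "nat \<Rightarrow> nat \<Rightarrow> int set \<Rightarrow> int set" where
  "dual m n D = {\<phi>. \<forall>d\<in>D. \<phi> + d \<in> Gamma m n}"

definition dual_hat :: "nat \<Rightarrow> nat \<Rightarrow> int set \<Rightarrow> int set" where
  "dual_hat m n D = (\<lambda>\<phi>. \<phi> - Inf (dual m n D)) ` dual m n D"

end

theory Submission
  imports Defs
begin


lemma rep_exists:
  fixes m n :: nat and x :: int
  assumes "0 < n" "coprime m n"
  shows "\<exists>a b. x = a * int m + b * int n \<and> 0 \<le> a \<and> a < int n"
proof -
  have "coprime (int m) (int n)" using assms by simp
  then have "gcd (int m) (int n) = 1" by simp
  then obtain u v where uv: "u * int m + v * int n = 1" using bezout_int[of "int m" "int n"] by auto
  define a where "a = (x*u) mod int n"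
  define q where "q = (x*u) div int n"
  have xu: "x*u = q * int n + a" unfolding a_def q_def by simp
  have "x = x * (u * int m + v * int n)" using uv by simp
  also have "\<dots> = (x*u) * int m + (x*v) * int n" by (simp add: algebra_simps)
  also have "\<dots> = a * int m + (q * int m + x*v) * int n" unfolding xu by (simp add: algebra_simps)
  finally show ?thesis using assms(1) unfolding a_def by (intro exI[of _ a] exI[of _ "q * int m + x*v"]) (auto simp: a_def)
qed

lemma rep_Gamma:
  fixes m n :: nat and a b :: int
  assumes "0 < n" "coprime m n" "0 \<le> a" "a < int n"
  shows "a * int m + b * int n \<in> Gamma m n \<longleftrightarrow> 0 \<le> b"
proof
  assume "a * int m + b * int n \<in> Gamma m n"
  then obtain a' b' :: nat where e: "a * int m + b * int n = int a' * int m + int b' * int n"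
    unfolding Gamma_def by auto
  have e2: "(int a' - a) * int m = (b - int b') * int n" using e by (simp add: algebra_simps)
  have "int n dvd (int a' - a) * int m" using e2 by (metis dvd_triv_right)
  moreover have "coprime (int n) (int m)" using assms(2) by (simp add: coprime_commute)
  ultimately have "int n dvd (int a' - a)" using coprime_dvd_mult_left_iff by blast
  then obtain t where t: "int a' - a = int n * t" by (auto elim: dvdE)
  have "t \<ge> 0"
  proof (rule ccontr)
    assume "\<not> t \<ge> 0"
    then have "t \<le> -1" by simp
    then have "int n * t \<le> - int n" using assms(1) by (metis mult_left_mono mult_minus1_right of_nat_0_le_iff)
    then show False using t assms(4) by simp
  qed
  have "(b - int b') * int n = (int m * t) * int n" using e2 t by (simp add: algebra_simps)
  then have "b - int b' = int m * t" using assms(1) by simp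
  then show "0 \<le> b" using \<open>t \<ge> 0\<close> by (smt (verit) mult_nonneg_nonneg of_nat_0_le_iff)
next
  assume "0 \<le> b"
  then show "a * int m + b * int n \<in> Gamma m n" unfolding Gamma_def using assms(3)
    by (intro CollectI exI[of _ "nat a"] exI[of _ "nat b"]) simp
qed

lemma Gamma_sym:
  fixes m n :: nat and x :: int
  assumes "0 < n" "coprime m n"
  shows "x \<in> Gamma m n \<longleftrightarrow> int m * int n - int m - int n - x \<notin> Gamma m n"
proof -
  obtain a b where ab: "x = a * int m + b * int n" "0 \<le> a" "a < int n" using rep_exists assms by blast
  have "int m * int n - int m - int n - x = (int n - 1 - a) * int m + (-1 - b) * int n"
    using ab(1) by (simp add: algebra_simps)
  then show ?thesis using rep_Gamma[OF assms, of a b] rep_Gamma[OF assms, of "int n - 1 - a" "-1-b"] ab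
    by auto
qed

lemma Gamma_nonneg: "x \<in> Gamma m n \<Longrightarrow> 0 \<le> x"
  unfolding Gamma_def by auto

lemma Gamma_large:
  fixes m n :: nat and x :: int
  assumes "0 < n" "coprime m n" "x > int m * int n - int m - int n"
  shows "x \<in> Gamma m n"
  using Gamma_sym[OF assms(1,2), of x] Gamma_nonneg[of "int m * int n - int m - int n - x" m n] assms(3)
  by auto

lemma Gamma_zero: "0 \<in> Gamma m n" unfolding Gamma_def
  by (rule CollectI, rule exI[of _ "0::nat"], rule exI[of _ "0::nat"]) simp
lemma Gamma_m: "int m \<in> Gamma m n" unfolding Gamma_def
  by (rule CollectI, rule exI[of _ "1::nat"], rule exI[of _ "0::nat"]) simp
lemma Gamma_n: "int n \<in> Gamma m n" unfolding Gamma_def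
  by (rule CollectI, rule exI[of _ "0::nat"], rule exI[of _ "1::nat"]) simp




lemma closed_iter:
  assumes "\<forall>x\<in>X. x + int q \<in> X" "y \<in> X"
  shows "y + int q * int k \<in> X"
proof (induction k)
  case 0 then show ?case using assms by simp
next
  case (Suc k)
  then have "y + int q * int k + int q \<in> X" using assms(1) by blast
  then show ?case by (simp add: algebra_simps)
qed

lemma gens_finite:
  assumes "\<forall>x\<in>X. L \<le> x" "\<forall>x. N \<le> x \<longrightarrow> x \<in> X"
  shows "finite (generators q X)"
proof -
  have "generators q X \<subseteq> {L..<N + int q}"
  proof
    fix b assume b: "b \<in> generators q X"
    then have "b \<in> X" "b - int q \<notin> X" unfolding generators_def by auto
    then have "L \<le> b" "\<not> N \<le> b - int q" using assms by auto
    then show "b \<in> {L..<N + int q}" by simp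
  qed
  then show ?thesis by (rule finite_subset) simp
qed

lemma gap_gen:
  assumes q: "0 < q" and cl: "\<forall>x\<in>X. x + int q \<in> X"
    and lo: "\<forall>x\<in>X. L \<le> x" and up: "\<forall>x. N \<le> x \<longrightarrow> x \<in> X"
  shows "gapcount q X x = card {b \<in> generators q X. x + int q \<le> b}"
proof -
  define f where "f b = x + (b - x) mod int q" for b
  let ?A = "{b \<in> generators q X. x + int q \<le> b}"
  let ?B = "{x..<x + int q} - X"
  have qpos: "int q > 0" using q by simp
  have inj: "inj_on f ?A"
  proof (rule inj_onI)
    fix b1 b2 assume b1: "b1 \<in> ?A" and b2: "b2 \<in> ?A" and e: "f b1 = f b2"
    have md: "(b1 - x) mod int q = (b2 - x) mod int q" using e unfolding f_def by simp
    have key: "\<not> (c1 < c2)" if c1: "c1 \<in> ?A" and c2: "c2 \<in> ?A"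
       and mc: "(c1 - x) mod int q = (c2 - x) mod int q" for c1 c2
    proof
      assume lt: "c1 < c2"
      have "(c2 - x) mod int q = (c1 - x) mod int q" using mc by simp
      then have "int q dvd (c2 - x) - (c1 - x)" by (simp only: mod_eq_dvd_iff)
      then have "int q dvd c2 - c1" by simp
      then obtain k where k: "c2 - c1 = int q * k" by (auto elim: dvdE)
      have "int q * k > 0" using k lt by simp
      then have "k > 0" using qpos by (simp add: zero_less_mult_iff)
      then have e3: "c2 - int q = c1 + int q * int (nat (k - 1))" using k by (simp add: algebra_simps)
      have "c1 \<in> X" using c1 unfolding generators_def by simp
      then have "c1 + int q * int (nat (k - 1)) \<in> X" by (rule closed_iter[OF cl])
      then have "c2 - int q \<in> X" using e3 by simp
      then show False using c2 unfolding generators_def by simp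
    qed
    show "b1 = b2" using key[OF b1 b2 md] key[OF b2 b1 md[symmetric]] by simp
  qed
  have img: "f ` ?A = ?B"
  proof
    show "f ` ?A \<subseteq> ?B"
    proof
      fix y assume "y \<in> f ` ?A"
      then obtain b where b: "b \<in> ?A" and y: "y = f b" by auto
      have r1: "0 \<le> (b - x) mod int q" "(b - x) mod int q < int q" using qpos by auto
      have yr: "y \<in> {x..<x + int q}" using r1 y f_def by simp
      have "b - y = int q * ((b - x) div int q)"
        using minus_mod_eq_mult_div[of "b-x" "int q"] unfolding y f_def by simp
      moreover have "b - y > 0" using b yr by auto
      ultimately have j: "(b - x) div int q > 0" using qpos by (simp add: zero_less_mult_iff)
      show "y \<in> ?B"
      proof (rule ccontr)
        assume "y \<notin> ?B"
        then have "y \<in> X" using yr by simp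
        have "b - int q = y + int q * int (nat ((b - x) div int q - 1))"
          using \<open>b - y = _\<close> j by (simp add: algebra_simps int_nat_eq)
        moreover have "y + int q * int (nat ((b - x) div int q - 1)) \<in> X"
          by (rule closed_iter[OF cl \<open>y \<in> X\<close>])
        ultimately have "b - int q \<in> X" by simp
        then show False using b unfolding generators_def by simp
      qed
    qed
  next
    show "?B \<subseteq> f ` ?A"
    proof
      fix y assume y: "y \<in> ?B"
      define T where "T = {k::nat. y + int q * int k \<in> X}"
      have "nat (N - y) \<in> T"
      proof -
        have "y + int q * int (nat (N - y)) \<ge> N"
        proof (cases "N \<le> y")
          case True then show ?thesis using qpos by simp
        next
          case False
          then have nn: "int (nat (N - y)) = N - y" by simp
          have "1 * (N - y) \<le> int q * (N - y)" using qpos False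
            by (intro mult_right_mono) auto
          then have "int q * int (nat (N - y)) \<ge> N - y" using nn by simp
          then show ?thesis by simp
        qed
        then show ?thesis unfolding T_def using up by simp
      qed
      define k0 where "k0 = (LEAST k. k \<in> T)"
      have k0T: "k0 \<in> T" unfolding k0_def using \<open>nat (N - y) \<in> T\<close> by (rule LeastI)
      have k0min: "\<And>k. k < k0 \<Longrightarrow> k \<notin> T" unfolding k0_def using not_less_Least by blast
      have "k0 \<noteq> 0" using k0T y unfolding T_def by (cases "k0 = 0") auto
      define b where "b = y + int q * int k0"
      have bX: "b \<in> X" using k0T unfolding T_def b_def by simp
      have "k0 - 1 \<notin> T" using k0min \<open>k0 \<noteq> 0\<close> by simp
      moreover have "b - int q = y + int q * int (k0 - 1)" using \<open>k0 \<noteq> 0\<close> unfolding b_def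
        by (simp add: of_nat_diff algebra_simps)
      ultimately have "b - int q \<notin> X" unfolding T_def by simp
      have "int k0 \<ge> 1" using \<open>k0 \<noteq> 0\<close> by simp
      then have "int q * 1 \<le> int q * int k0" using qpos by (intro mult_left_mono) auto
      then have "int q \<le> int q * int k0" by simp
      moreover have "x \<le> y" using y by simp
      ultimately have bge: "x + int q \<le> b" unfolding b_def by linarith
      have "b - x = (y - x) + int q * int k0" unfolding b_def by simp
      then have "(b - x) mod int q = ((y - x) + int q * int k0) mod int q" by (simp only:)
      also have "\<dots> = (y - x) mod int q" by (rule mod_mult_self2)
      also have "\<dots> = y - x" using y by (simp add: mod_pos_pos_trivial)
      finally have "f b = y" unfolding f_def by simp
      moreover have "b \<in> ?A" using bX \<open>b - int q \<notin> X\<close> bge unfolding generators_def by simp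
      ultimately show "y \<in> f ` ?A" by blast
    qed
  qed
  have "card ?B = card ?A" using card_image[OF inj] img by simp
  then show ?thesis unfolding gapcount_def by simp
qed

lemma sorted_card_le:
  fixes S :: "int set"
  assumes "finite S"
  shows "k < card {x\<in>S. x \<le> t} \<longleftrightarrow> k < card S \<and> sorted_list_of_set S ! k \<le> t"
proof -
  define s where "s = sorted_list_of_set S"
  have len: "length s = card S" and dist: "distinct s" and srt: "sorted s" and st: "set s = S"
    using assms unfolding s_def by auto
  have fin: "finite {x\<in>S. x \<le> t}" using assms by simp
  show ?thesis
  proof
    assume k: "k < card {x\<in>S. x \<le> t}"
    have kS: "k < card S" using k card_mono[OF assms, of "{x\<in>S. x \<le> t}"] by auto
    moreover have "s ! k \<le> t"
    proof (rule ccontr)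
      assume "\<not> s ! k \<le> t"
      have "{x\<in>S. x \<le> t} \<subseteq> (\<lambda>i. s ! i) ` {..<k}"
      proof
        fix x assume x: "x \<in> {x\<in>S. x \<le> t}"
        then obtain i where i: "i < length s" "x = s ! i" using st by (auto simp: in_set_conv_nth)
        have "i < k"
        proof (rule ccontr)
          assume "\<not> i < k"
          then have "s ! k \<le> s ! i" using sorted_nth_mono[OF srt, of k i] i by simp
          then show False using x i \<open>\<not> s ! k \<le> t\<close> by simp
        qed
        then show "x \<in> (\<lambda>i. s ! i) ` {..<k}" using i by auto
      qed
      then have "card {x\<in>S. x \<le> t} \<le> card ((\<lambda>i. s ! i) ` {..<k})" by (intro card_mono) auto
      also have "\<dots> \<le> k" using card_image_le[of "{..<k}" "\<lambda>i. s ! i"] by simp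
      finally show False using k by simp
    qed
    ultimately show "k < card S \<and> sorted_list_of_set S ! k \<le> t" unfolding s_def by simp
  next
    assume h: "k < card S \<and> sorted_list_of_set S ! k \<le> t"
    then have kl: "k < length s" and skt: "s ! k \<le> t" using len unfolding s_def by auto
    have sub: "(\<lambda>i. s ! i) ` {..k} \<subseteq> {x\<in>S. x \<le> t}"
    proof
      fix x assume "x \<in> (\<lambda>i. s ! i) ` {..k}"
      then obtain i where "i \<le> k" "x = s ! i" by auto
      then show "x \<in> {x\<in>S. x \<le> t}" using sorted_nth_mono[OF srt, of i k] kl skt st
        by (auto simp: in_set_conv_nth) (metis order_le_less_trans nth_mem)
    qed
    have inj: "inj_on (\<lambda>i. s ! i) {..k}" using dist kl
      by (intro inj_onI) (simp add: nth_eq_iff_index_eq)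
    have "Suc k = card ((\<lambda>i. s ! i) ` {..k})" using card_image[OF inj] by simp
    also have "\<dots> \<le> card {x\<in>S. x \<le> t}" using card_mono[OF fin sub] .
    finally show "k < card {x\<in>S. x \<le> t}" by simp
  qed
qed




lemma card_reflect:
  assumes "inj h"
  shows "card {e \<in> h ` A. P e} = card {a \<in> A. P (h a)}"
proof -
  have "{e \<in> h ` A. P e} = h ` {a \<in> A. P (h a)}" by auto
  moreover have "inj_on h {a \<in> A. P (h a)}" using assms by (simp add: inj_on_def)
  ultimately show ?thesis by (simp add: card_image)
qed

lemma inj_refl: "inj (\<lambda>a::int. c - a)"
  by (rule injI) simp

lemma gens_dual:
  fixes F :: int
  shows "generators p {y. F - y \<notin> D} = (\<lambda>b. (F + int p) - b) ` generators p D"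
proof (rule set_eqI)
  fix x
  show "x \<in> generators p {y. F - y \<notin> D} \<longleftrightarrow> x \<in> (\<lambda>b. (F + int p) - b) ` generators p D"
  proof
    assume "x \<in> generators p {y. F - y \<notin> D}"
    then have h: "F - x \<notin> D" "F - (x - int p) \<in> D" unfolding generators_def by auto
    have "F + int p - x \<in> generators p D" using h unfolding generators_def
      by (simp add: algebra_simps)
    moreover have "x = F + int p - (F + int p - x)" by simp
    ultimately show "x \<in> (\<lambda>b. (F + int p) - b) ` generators p D" by blast
  next
    assume "x \<in> (\<lambda>b. (F + int p) - b) ` generators p D"
    then obtain b where b: "b \<in> D" "b - int p \<notin> D" "x = F + int p - b"
      unfolding generators_def by auto
    have e1: "F - x = b - int p" using b(3) by simp
    have e2: "F - (x - int p) = b" using b(3) by simp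
    have "F - x \<notin> D" using e1 b(2) by simp
    moreover have "F - (x - int p) \<in> D" using e2 b(1) by simp
    ultimately show "x \<in> generators p {y. F - y \<notin> D}" unfolding generators_def
      by simp
  qed
qed

theorem mainTheorem5:
  fixes m n :: nat and D :: "int set"
  assumes "0 < m" and "0 < n" and "coprime m n"
    and "semimodule m n D" and "zero_normalized D"
  shows "G_n m n D = transpose_diag (G_m m n (dual_hat m n D))"
proof -
  define K where "K = int m * int n - int m - int n"
  have D0: "0 \<in> D" and Dpos: "\<forall>x\<in>D. 0 \<le> x" using assms(5) unfolding zero_normalized_def by auto
  have Dcl: "\<forall>x\<in>D. \<forall>g\<in>Gamma m n. x + g \<in> D" using assms(4) unfolding semimodule_def by auto
  have clm: "\<forall>x\<in>D. x + int m \<in> D" using Dcl Gamma_m by blast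
  have cln: "\<forall>x\<in>D. x + int n \<in> D" using Dcl Gamma_n by blast
  have GD: "g \<in> D" if "g \<in> Gamma m n" for g using Dcl D0 that by force
  have Dbig: "\<forall>x. K + 1 \<le> x \<longrightarrow> x \<in> D"
    using GD Gamma_large[OF assms(2,3)] unfolding K_def by auto
  have Kge: "-1 \<le> K"
  proof -
    have "0 \<le> (int m - 1) * (int n - 1)" using assms(1,2) by simp
    then show ?thesis unfolding K_def by (simp add: algebra_simps)
  qed
  obtain F where F1: "F \<notin> D" and F2: "\<And>s. s \<notin> D \<Longrightarrow> s \<le> F"
  proof -
    define S where "S = {s. -1 \<le> s \<and> s \<le> K \<and> s \<notin> D}"
    have finS: "finite S" unfolding S_def by (rule finite_subset[of _ "{-1..K}"]) auto
    have m1: "-1 \<in> S" unfolding S_def using Kge Dpos by force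
    have "Max S \<in> S" using finS m1 by (intro Max_in) auto
    then have "Max S \<notin> D" unfolding S_def by simp
    moreover have "s \<le> Max S" if "s \<notin> D" for s
    proof (cases "-1 \<le> s")
      case True
      have "s \<le> K"
      proof (rule ccontr)
        assume "\<not> s \<le> K"
        then have "K + 1 \<le> s" by simp
        then show False using that Dbig by blast
      qed
      then have "s \<in> S" unfolding S_def using True that by simp
      then show ?thesis using finS by simp
    next
      case False
      have "-1 \<le> Max S" using finS m1 by simp
      then show ?thesis using False by simp
    qed
    ultimately show ?thesis using that by blast
  qed
  have KnG: "K \<notin> Gamma m n"
    using Gamma_sym[OF assms(2,3), of K] Gamma_zero unfolding K_def by simp
  have dual_eq: "dual m n D = {\<phi>. K - \<phi> \<notin> D}"
  proof (rule set_eqI)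
    fix \<phi>
    show "\<phi> \<in> dual m n D \<longleftrightarrow> \<phi> \<in> {\<phi>. K - \<phi> \<notin> D}"
    proof
      assume h: "\<phi> \<in> dual m n D"
      show "\<phi> \<in> {\<phi>. K - \<phi> \<notin> D}"
      proof (rule ccontr)
        assume "\<phi> \<notin> {\<phi>. K - \<phi> \<notin> D}"
        then have "K - \<phi> \<in> D" by simp
        then have "\<phi> + (K - \<phi>) \<in> Gamma m n" using h unfolding dual_def by blast
        then show False using KnG by simp
      qed
    next
      assume h: "\<phi> \<in> {\<phi>. K - \<phi> \<notin> D}"
      show "\<phi> \<in> dual m n D" unfolding dual_def
      proof (intro CollectI ballI)
        fix d assume d: "d \<in> D"
        show "\<phi> + d \<in> Gamma m n"
        proof (rule ccontr)
          assume "\<phi> + d \<notin> Gamma m n"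
          then have g: "K - (\<phi> + d) \<in> Gamma m n"
            using Gamma_sym[OF assms(2,3), of "\<phi> + d"] unfolding K_def by simp
          have "d + (K - (\<phi> + d)) \<in> D" using Dcl d g by blast
          then show False using h by simp
        qed
      qed
    qed
  qed
  have inf_eq: "Inf (dual m n D) = K - F"
    unfolding dual_eq
  proof (rule cInf_eq_minimum)
    show "K - F \<in> {\<phi>. K - \<phi> \<notin> D}" using F1 by simp
    show "K - F \<le> x" if "x \<in> {\<phi>. K - \<phi> \<notin> D}" for x using F2[of "K - x"] that by simp
  qed
  define E where "E = {y. F - y \<notin> D}"
  have hat: "dual_hat m n D = E"
  proof (rule set_eqI)
    fix y
    show "y \<in> dual_hat m n D \<longleftrightarrow> y \<in> E"
    proof
      assume "y \<in> dual_hat m n D"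
      then obtain \<phi> where p: "K - \<phi> \<notin> D" "y = \<phi> - (K - F)"
        unfolding dual_hat_def inf_eq unfolding dual_eq by auto
      then have "F - y = K - \<phi>" by simp
      then show "y \<in> E" unfolding E_def using p(1) by simp
    next
      assume "y \<in> E"
      then have "K - (y + (K - F)) \<notin> D" "y = (y + (K - F)) - (K - F)" unfolding E_def
        by (simp_all add: algebra_simps)
      then show "y \<in> dual_hat m n D"
        unfolding dual_hat_def inf_eq unfolding dual_eq by blast
    qed
  qed
  have clEn: "\<forall>x\<in>E. x + int n \<in> E"
  proof
    fix x assume "x \<in> E"
    then have "F - x \<notin> D" unfolding E_def by simp
    then have "F - (x + int n) \<notin> D" using cln by (metis diff_add_cancel diff_diff_eq)
    then show "x + int n \<in> E" unfolding E_def by simp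
  qed
  have Epos: "\<forall>x\<in>E. 0 \<le> x"
  proof
    fix x assume "x \<in> E"
    then have "F - x \<le> F" using F2 unfolding E_def by simp
    then show "0 \<le> x" by simp
  qed
  have Ebig: "\<forall>x. F + 1 \<le> x \<longrightarrow> x \<in> E"
  proof (intro allI impI)
    fix x assume "F + 1 \<le> x"
    then have "F - x < 0" by simp
    then have "F - x \<notin> D" using Dpos by force
    then show "x \<in> E" unfolding E_def by simp
  qed
  define A where "A = generators m D"
  define B where "B = generators n D"
  define A' where "A' = generators m E"
  define B' where "B' = generators n E"
  have A'eq: "A' = (\<lambda>b. (F + int m) - b) ` A" unfolding A'_def A_def E_def by (rule gens_dual)
  have B'eq: "B' = (\<lambda>b. (F + int n) - b) ` B" unfolding B'_def B_def E_def by (rule gens_dual)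
  have finA': "finite A'" unfolding A'_def using Epos Ebig by (rule gens_finite)
  have finB: "finite B" unfolding B_def using Dpos Dbig by (rule gens_finite)
  define sB where "sB = sorted_list_of_set B"
  define sE where "sE = sorted_list_of_set A'"
  have lenB: "length sB = card B" unfolding sB_def by simp
  have lenE: "length sE = card A'" unfolding sE_def by simp
  have gcD: "gapcount m D t = card {e \<in> A'. e \<le> F - t}" for t
  proof -
    have "gapcount m D t = card {a \<in> A. t + int m \<le> a}"
      unfolding A_def using gap_gen[OF assms(1) clm Dpos Dbig] .
    also have "\<dots> = card {e \<in> A'. e \<le> F - t}"
      unfolding A'eq using card_reflect[OF inj_refl, of "F + int m" A "\<lambda>e. e \<le> F - t"]
      by (simp add: algebra_simps)
    finally show ?thesis .
  qed
  have gcE: "gapcount n E t = card {b \<in> B. b \<le> F - t}" for t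
  proof -
    have "gapcount n E t = card {b \<in> B'. t + int n \<le> b}"
      unfolding B'_def using gap_gen[OF assms(2) clEn Epos Ebig] .
    also have "\<dots> = card {b \<in> B. b \<le> F - t}"
      unfolding B'eq using card_reflect[OF inj_refl, of "F + int n" B "\<lambda>e. t + int n \<le> e"]
      by (simp add: algebra_simps)
    finally show ?thesis .
  qed
  have L: "G_n m n D = {(k, l). k < card B \<and> l < card A' \<and> sE ! l \<le> F - sB ! k}"
  proof -
    have "G_n m n D = {(k, l). k < length sB \<and> l < gapcount m D (sB ! k)}"
      unfolding G_n_def young_diag_def sB_def B_def by simp
    also have "\<dots> = {(k, l). k < card B \<and> l < card A' \<and> sE ! l \<le> F - sB ! k}"
      unfolding gcD lenB sE_def using sorted_card_le[OF finA'] by simp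
    finally show ?thesis .
  qed
  have R: "G_m m n (dual_hat m n D) = {(l, k). l < card A' \<and> k < card B \<and> sB ! k \<le> F - sE ! l}"
  proof -
    have "G_m m n (dual_hat m n D) = {(l, k). l < length sE \<and> k < gapcount n E (sE ! l)}"
      unfolding G_m_def young_diag_def sE_def A'_def hat by simp
    also have "\<dots> = {(l, k). l < card A' \<and> k < card B \<and> sB ! k \<le> F - sE ! l}"
      unfolding gcE lenE sB_def using sorted_card_le[OF finB] by simp
    finally show ?thesis .
  qed
  show ?thesis unfolding L R transpose_diag_def by auto
qed


end
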